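(* For every integer $k\ge 2$ and every $h>k/(2k-1)$ there is an instance with $k$ groups of binary agents in which no allocation is $h$-democratic positive-MMS-fair.
   Context: There is a finite set $G$ of goods and $k$ groups $A_1,\dots,A_k$ with $n_i\ge1$ agents in $A_i$. A binary agent has an additive utility with $u_a(\{g\})\in\{0,1\}$. An allocation is a partition $(G_1,\dots,G_k)$ of $G$; agents of $A_i$ get $u_a(G_i)$. $\mathrm{MMS}^k_a(G)$ is the maximum over partitions of $G$ into $k$ sets of the minimum of $u_a$ over those sets. The allocation is positive-MMS-fair for $a\in A_i$ if $\mathrm{MMS}^k_a(G)>0$ implies $u_a(G_i)>0$. An allocation is $h$-democratic fair if for each $i$ at least $h\cdot n_i$ agents of $A_i$ find it fair. *)

theory Defs
  imports Complex_Main
begin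

text \<open>Groups are indexed 0..k-1;
group i has agents 0..n i - 1. A binary agent (i,j) has utility u i j :: nat => bool,
u i j g meaning u_a({g}) = 1. Additive utility of a bundle S is the number of liked goods.\<close>

definition bval :: "(nat \<Rightarrow> bool) \<Rightarrow> nat set \<Rightarrow> nat" where
  "bval v S = card {g \<in> S. v g}"

text \<open>An allocation / partition of G into k (possibly empty) labelled sets is encoded
by a map p assigning to each good of G a label below k; part i is {g in G. p g = i}.\<close>

definition is_partition :: "nat \<Rightarrow> nat set \<Rightarrow> (nat \<Rightarrow> nat) \<Rightarrow> bool" where
  "is_partition k G p \<longleftrightarrow> (\<forall>g\<in>G. p g < k)"

definition part :: "nat set \<Rightarrow> (nat \<Rightarrow> nat) \<Rightarrow> nat \<Rightarrow> nat set" where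
  "part G p i = {g \<in> G. p g = i}"

definition mms :: "nat \<Rightarrow> (nat \<Rightarrow> bool) \<Rightarrow> nat set \<Rightarrow> nat" where
  "mms k v G = Max {Min {bval v (part G p i) | i. i < k} | p. is_partition k G p}"

definition pos_mms_fair :: "nat \<Rightarrow> nat set \<Rightarrow> (nat \<Rightarrow> bool) \<Rightarrow> (nat \<Rightarrow> nat) \<Rightarrow> nat \<Rightarrow> bool" where
  "pos_mms_fair k G v p i \<longleftrightarrow> (mms k v G > 0 \<longrightarrow> bval v (part G p i) > 0)"

definition democratic_fair ::
  "real \<Rightarrow> nat \<Rightarrow> nat set \<Rightarrow> (nat \<Rightarrow> nat) \<Rightarrow> (nat \<Rightarrow> nat \<Rightarrow> nat \<Rightarrow> bool) \<Rightarrow> (nat \<Rightarrow> nat) \<Rightarrow> bool" where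
  "democratic_fair h k G n u p \<longleftrightarrow>
     (\<forall>i<k. real (card {j. j < n i \<and> pos_mms_fair k G (u i j) p i}) \<ge> h * real (n i))"

end

theory Submission
  imports Defs
begin

definition likes :: "nat \<Rightarrow> nat \<Rightarrow> nat \<Rightarrow> nat \<Rightarrow> bool" where
  "likes k m j g \<longleftrightarrow> g < m \<and> (if j \<le> g then g - j < k else g + m - j < k)"

lemma card_likes:
  assumes "k < m"
  shows "card {j. j < m \<and> likes k m j g} \<le> k"
proof -
  have "{j. j < m \<and> likes k m j g} \<subseteq> (\<lambda>d. if d \<le> g then g - d else g + m - d) ` {..<k}"
  proof
    fix j assume "j \<in> {j. j < m \<and> likes k m j g}"
    hence j: "j < m" "likes k m j g" by auto
    show "j \<in> (\<lambda>d. if d \<le> g then g - d else g + m - d) ` {..<k}"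
    proof (cases "j \<le> g")
      case True
      then show ?thesis using j unfolding likes_def
        by (intro image_eqI[of _ _ "g - j"]) auto
    next
      case False
      then show ?thesis using j unfolding likes_def
        by (intro image_eqI[of _ _ "g + m - j"]) auto
    qed
  qed
  hence "card {j. j < m \<and> likes k m j g} \<le> card ((\<lambda>d. if d \<le> g then g - d else g + m - d) ` {..<k})"
    by (intro card_mono) auto
  also have "\<dots> \<le> card {..<k}" by (rule card_image_le) simp
  also have "\<dots> = k" by simp
  finally show ?thesis .
qed

lemma bval_pos: "finite S \<Longrightarrow> bval v S > 0 \<longleftrightarrow> (\<exists>g\<in>S. v g)"
  unfolding bval_def by (auto simp: card_gt_0_iff)

lemma mms_pos:
  assumes k: "k \<ge> 1" "k < m" and j: "j < m"
  shows "mms k (likes k m j) {..<m} > 0"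
proof -
  define q where "q g = (if j \<le> g then g - j else g + m - j)" for g
  define p where "p g = (if q g < k then q g else 0)" for g
  have pp: "is_partition k {..<m} p" unfolding is_partition_def p_def using k by auto
  have parts: "bval (likes k m j) (part {..<m} p i) \<ge> 1" if i: "i < k" for i
  proof -
    define gi where "gi = (if j + i < m then j + i else j + i - m)"
    have gi: "gi < m" "q gi = i" using i j k unfolding gi_def q_def by auto
    have "gi \<in> part {..<m} p i" using gi i unfolding part_def p_def by auto
    moreover have "likes k m j gi" using gi i unfolding likes_def q_def
      by (auto split: if_splits)
    ultimately have "bval (likes k m j) (part {..<m} p i) > 0"
      by (subst bval_pos) (auto simp: part_def)
    thus ?thesis by simp
  qed
  let ?A = "{bval (likes k m j) (part {..<m} p i) | i. i < k}"
  have "finite ?A" by simp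
  moreover have "?A \<noteq> {}" using k by (auto intro!: exI[of _ 0])
  ultimately have "Min ?A \<in> ?A" by (rule Min_in)
  hence m1: "Min ?A \<ge> 1" using parts by auto
  let ?B = "{Min {bval (likes k m j) (part {..<m} p i) | i. i < k} | p. is_partition k {..<m} p}"
  have bnd: "bval v (part {..<m} p' i) \<le> m" for v p' i
  proof -
    have "bval v (part {..<m} p' i) \<le> card {..<m}"
      unfolding bval_def part_def by (intro card_mono) auto
    thus ?thesis by simp
  qed
  have "?B \<subseteq> {..m}"
  proof
    fix x assume "x \<in> ?B"
    then obtain p' where x: "x = Min {bval (likes k m j) (part {..<m} p' i) | i. i < k}" by auto
    let ?C = "{bval (likes k m j) (part {..<m} p' i) | i. i < k}"
    have "finite ?C" "?C \<noteq> {}" using k by (auto intro!: exI[of _ 0])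
    hence "Min ?C \<in> ?C" by (rule Min_in)
    thus "x \<in> {..m}" using x bnd by auto
  qed
  hence fB: "finite ?B" by (rule finite_subset) simp
  have "Min ?A \<in> ?B" using pp by auto
  hence "Min ?A \<le> Max ?B" using fB by (rule Max_ge[rotated])
  thus ?thesis using m1 unfolding mms_def by simp
qed

theorem mainTheorem14:
  fixes k :: nat and h :: real
  assumes "k \<ge> 2" and "h > real k / (2 * real k - 1)"
  shows "\<exists>(G :: nat set) (n :: nat \<Rightarrow> nat) (u :: nat \<Rightarrow> nat \<Rightarrow> nat \<Rightarrow> bool).
           finite G \<and> (\<forall>i<k. n i \<ge> 1) \<and>
           \<not> (\<exists>p. is_partition k G p \<and> democratic_fair h k G n u p)"
proof -
  define m where "m = 2 * k - 1"
  have km: "k < m" "1 \<le> k" using assms(1) unfolding m_def by auto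
  have rm: "real m = 2 * real k - 1" using assms(1) unfolding m_def by auto
  have hk: "h * real m > real k"
    using assms(2) rm km by (simp add: pos_divide_less_eq mult.commute)
  show ?thesis
  proof (intro exI conjI)
    show "finite {..<m}" by simp
    show "\<forall>i<k. (\<lambda>_. m) i \<ge> 1" using km by auto
    show "\<not> (\<exists>p. is_partition k {..<m} p \<and> democratic_fair h k {..<m} (\<lambda>_. m) (\<lambda>_ j. likes k m j) p)"
    proof
      assume "\<exists>p. is_partition k {..<m} p \<and> democratic_fair h k {..<m} (\<lambda>_. m) (\<lambda>_ j. likes k m j) p"
      then obtain p where p: "is_partition k {..<m} p"
        and df: "democratic_fair h k {..<m} (\<lambda>_. m) (\<lambda>_ j. likes k m j) p" by blast
      have "\<exists>i<k. card (part {..<m} p i) \<le> 1"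
      proof (rule ccontr)
        assume "\<not> ?thesis"
        hence big: "\<forall>i<k. card (part {..<m} p i) \<ge> 2" by auto
        have U: "(\<Union>i\<in>{..<k}. part {..<m} p i) = {..<m}"
          using p unfolding is_partition_def part_def by auto
        have "card (\<Union>i\<in>{..<k}. part {..<m} p i) = (\<Sum>i<k. card (part {..<m} p i))"
          by (intro card_UN_disjoint) (auto simp: part_def)
        also have "\<dots> \<ge> (\<Sum>i<k. 2)" using big by (intro sum_mono) auto
        finally have "m \<ge> 2 * k" using U by simp
        thus False unfolding m_def using km by simp
      qed
      then obtain i where i: "i < k" and c1: "card (part {..<m} p i) \<le> 1" by blast
      obtain g where g: "part {..<m} p i \<subseteq> {g}"
      proof (cases "part {..<m} p i = {}")
        case True then show ?thesis using that by blast
      next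
        case False
        then obtain g where "g \<in> part {..<m} p i" by blast
        moreover have "finite (part {..<m} p i)" by (simp add: part_def)
        ultimately have "part {..<m} p i = {g}" using c1
          by (metis card_le_Suc0_iff_eq subset_singleton_iff empty_iff subsetI singletonI One_nat_def)
        then show ?thesis using that by blast
      qed
      have sub: "{j. j < m \<and> pos_mms_fair k {..<m} (likes k m j) p i} \<subseteq> {j. j < m \<and> likes k m j g}"
      proof
        fix j assume "j \<in> {j. j < m \<and> pos_mms_fair k {..<m} (likes k m j) p i}"
        hence j: "j < m" and f: "pos_mms_fair k {..<m} (likes k m j) p i" by auto
        have "bval (likes k m j) (part {..<m} p i) > 0"
          using f mms_pos[OF km(2) km(1) j] unfolding pos_mms_fair_def by auto
        then obtain g' where "g' \<in> part {..<m} p i" "likes k m j g'"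
          by (subst (asm) bval_pos) (auto simp: part_def)
        thus "j \<in> {j. j < m \<and> likes k m j g}" using g j by auto
      qed
      have "card {j. j < m \<and> pos_mms_fair k {..<m} (likes k m j) p i} \<le> k"
      proof -
        have "finite {j. j < m \<and> likes k m j g}" by simp
        hence "card {j. j < m \<and> pos_mms_fair k {..<m} (likes k m j) p i} \<le> card {j. j < m \<and> likes k m j g}"
          using sub by (rule card_mono)
        thus ?thesis using card_likes[OF km(1), of g] by linarith
      qed
      hence "real (card {j. j < m \<and> pos_mms_fair k {..<m} (likes k m j) p i}) \<le> real k" by simp
      moreover have "real (card {j. j < m \<and> pos_mms_fair k {..<m} (likes k m j) p i}) \<ge> h * real m"
        using df i unfolding democratic_fair_def by auto
      ultimately show False using hk by linarith
    qed
  qed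
qed

end
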